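(* Let $A=(A_j)_{j=0}^{d-1}$ be an injective MPS tensor of bond dimension $D$ in left canonical form, let $u$ be a $d\times d$ unitary matrix, and let $\mathbb{E}_u=\sum_{j,k=0}^{d-1} u_{jk}\, A_k\otimes \overline{A_j}$. Then $\mathbb{E}_u$ has an eigenvalue of modulus $1$ if and only if there exist a unitary $D\times D$ matrix $v$ and an angle $\theta$ such that for all $j\in\{0,\dots,d-1\}$, $$\sum_{k=0}^{d-1}u_{jk}A_k = e^{i\theta}\, v A_j v^\dagger .$$
   Context: An MPS tensor of physical dimension $d$ and bond dimension $D$ is a collection of complex $D\times D$ matrices $A_0,\dots,A_{d-1}$. It is in left canonical form if $\sum_{j=0}^{d-1}A_j^\dagger A_j=\mathbb{1}_{D}$. Its transfer matrix is $\mathbb{E}=\sum_{j}A_j\otimes\overline{A_j}$. The tensor (in left canonical form) is called injective if $1$ is a non-degenerate eigenvalue of the transfer matrix whose left eigenvector is the identity $\mathbb{1}_D$ (unique up to scaling, i.e. the only solution of $\sum_jA_j^\dagger XA_j=X$ is $X\propto\mathbb{1}$), all other eigenvalues of $\mathbb{E}$ have modulus strictly less than $1$, and there is a unique, full-rank density matrix $\rho$ with $\sum_j A_j\rho A_j^\dagger=\rho$. (All eigenvalues of $\mathbb{E}_u$ have modulus at most $1$.) *)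

theory Defs
  imports "Jordan_Normal_Form.Jordan_Normal_Form"
begin

text \<open>Complex matrices are Jordan_Normal_Form matrices of type complex mat,
  with explicit dimensions. An MPS tensor is a family A 0, ..., A (d-1) of
  D x D matrices, given as a function on nat.\<close>

definition cadj :: "complex mat \<Rightarrow> complex mat" where
  "cadj M = mat (dim_col M) (dim_row M) (\<lambda>(i,j). cnj (M $$ (j,i)))"

definition cconj :: "complex mat \<Rightarrow> complex mat" where
  "cconj M = map_mat cnj M"

text \<open>Kronecker product, with the standard row/column indexing (i1,i2) <-> i1 * n2 + i2.\<close>
definition kron :: "complex mat \<Rightarrow> complex mat \<Rightarrow> complex mat" where
  "kron X Y = mat (dim_row X * dim_row Y) (dim_col X * dim_col Y)
     (\<lambda>(i,j). X $$ (i div dim_row Y, j div dim_col Y) * Y $$ (i mod dim_row Y, j mod dim_col Y))"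

definition msum :: "nat \<Rightarrow> nat \<Rightarrow> nat \<Rightarrow> (nat \<Rightarrow> complex mat) \<Rightarrow> complex mat" where
  "msum n m d f = mat n m (\<lambda>(i,j). \<Sum>k<d. f k $$ (i,j))"

definition unitary_cmat :: "nat \<Rightarrow> complex mat \<Rightarrow> bool" where
  "unitary_cmat n U \<longleftrightarrow> U \<in> carrier_mat n n \<and> cadj U * U = 1\<^sub>m n \<and> U * cadj U = 1\<^sub>m n"

definition mps_tensor :: "nat \<Rightarrow> nat \<Rightarrow> (nat \<Rightarrow> complex mat) \<Rightarrow> bool" where
  "mps_tensor d D A \<longleftrightarrow> (\<forall>j<d. A j \<in> carrier_mat D D)"

definition left_canonical :: "nat \<Rightarrow> nat \<Rightarrow> (nat \<Rightarrow> complex mat) \<Rightarrow> bool" where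
  "left_canonical d D A \<longleftrightarrow> msum D D d (\<lambda>j. cadj (A j) * A j) = 1\<^sub>m D"

definition transfer :: "nat \<Rightarrow> nat \<Rightarrow> (nat \<Rightarrow> complex mat) \<Rightarrow> complex mat" where
  "transfer d D A = msum (D*D) (D*D) d (\<lambda>j. kron (A j) (cconj (A j)))"

definition transfer_u :: "nat \<Rightarrow> nat \<Rightarrow> complex mat \<Rightarrow> (nat \<Rightarrow> complex mat) \<Rightarrow> complex mat" where
  "transfer_u d D u A = msum (D*D) (D*D) d
     (\<lambda>j. msum (D*D) (D*D) d (\<lambda>k. u $$ (j,k) \<cdot>\<^sub>m kron (A k) (cconj (A j))))"

definition ctrace :: "complex mat \<Rightarrow> complex" where
  "ctrace M = (\<Sum>i<dim_row M. M $$ (i,i))"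

definition density_mat :: "nat \<Rightarrow> complex mat \<Rightarrow> bool" where
  "density_mat D \<rho> \<longleftrightarrow> \<rho> \<in> carrier_mat D D \<and> cadj \<rho> = \<rho>
     \<and> (\<forall>v \<in> carrier_vec D. 0 \<le> Re (conjugate v \<bullet> (\<rho> *\<^sub>v v)))
     \<and> ctrace \<rho> = 1"

definition injective_mps :: "nat \<Rightarrow> nat \<Rightarrow> (nat \<Rightarrow> complex mat) \<Rightarrow> bool" where
  "injective_mps d D A \<longleftrightarrow>
     left_canonical d D A
     \<and> eigenvalue (transfer d D A) 1
     \<and> order 1 (char_poly (transfer d D A)) = 1
     \<and> (\<forall>X \<in> carrier_mat D D. msum D D d (\<lambda>j. cadj (A j) * X * A j) = X
            \<longrightarrow> (\<exists>c. X = c \<cdot>\<^sub>m 1\<^sub>m D))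
     \<and> (\<forall>z. eigenvalue (transfer d D A) z \<and> z \<noteq> 1 \<longrightarrow> cmod z < 1)
     \<and> (\<exists>\<rho>. density_mat D \<rho> \<and> msum D D d (\<lambda>j. A j * \<rho> * cadj (A j)) = \<rho> \<and> det \<rho> \<noteq> 0
          \<and> (\<forall>\<sigma>. density_mat D \<sigma> \<and> msum D D d (\<lambda>j. A j * \<sigma> * cadj (A j)) = \<sigma> \<longrightarrow> \<sigma> = \<rho>))"

end

theory Submission
  imports Defs
begin


lemma cadj_carrier[simp]: "M \<in> carrier_mat n m \<Longrightarrow> cadj M \<in> carrier_mat m n"
  unfolding cadj_def by auto
lemma cadj_dims[simp]: "dim_row (cadj M) = dim_col M" "dim_col (cadj M) = dim_row M"
  unfolding cadj_def by auto
lemma cadj_index[simp]: "i < dim_col M \<Longrightarrow> j < dim_row M \<Longrightarrow> cadj M $$ (i,j) = cnj (M $$ (j,i))"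
  unfolding cadj_def by auto
lemma cadj_cadj[simp]: "cadj (cadj M) = M"
  by (rule eq_matI, auto)
lemma cadj_mult: assumes "M \<in> carrier_mat n m" "N \<in> carrier_mat m p"
  shows "cadj (M * N) = cadj N * cadj M"
  by (rule eq_matI, insert assms, auto simp: scalar_prod_def intro!: sum.cong)
lemma cadj_smult: "cadj (c \<cdot>\<^sub>m M) = cnj c \<cdot>\<^sub>m cadj M"
  by (rule eq_matI, auto)
lemma cadj_one[simp]: "cadj (1\<^sub>m n) = 1\<^sub>m n"
  by (rule eq_matI, auto)

lemma msum_carrier[simp]: "msum n m d f \<in> carrier_mat n m"
  unfolding msum_def by auto
lemma msum_dims[simp]: "dim_row (msum n m d f) = n" "dim_col (msum n m d f) = m"
  unfolding msum_def by auto
lemma msum_index[simp]: "i < n \<Longrightarrow> k < m \<Longrightarrow> msum n m d f $$ (i,k) = (\<Sum>j<d. f j $$ (i,k))"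
  unfolding msum_def by auto
lemma msum_cong: "(\<And>j. j < d \<Longrightarrow> f j = g j) \<Longrightarrow> msum n m d f = msum n m d g"
  unfolding msum_def by auto

lemma mult_msum_right:
  assumes "M \<in> carrier_mat n m" "\<And>j. j < d \<Longrightarrow> f j \<in> carrier_mat m p"
  shows "M * msum m p d f = msum n p d (\<lambda>j. M * f j)"
proof (rule eq_matI)
  fix i k assume ik: "i < dim_row (msum n p d (\<lambda>j. M * f j))" "k < dim_col (msum n p d (\<lambda>j. M * f j))"
  hence i: "i < n" and k: "k < p" by auto
  have "(M * msum m p d f) $$ (i,k) = (\<Sum>l<m. M $$ (i,l) * (\<Sum>j<d. f j $$ (l,k)))"
    using assms i k by (simp add: scalar_prod_def lessThan_atLeast0)
  also have "\<dots> = (\<Sum>j<d. \<Sum>l<m. M $$ (i,l) * f j $$ (l,k))"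
    by (simp add: sum_distrib_left sum.swap[of _ "{..<m}"])
  also have "\<dots> = msum n p d (\<lambda>j. M * f j) $$ (i,k)"
    using assms(1) i k by (auto simp add: scalar_prod_def lessThan_atLeast0 intro!: sum.cong dest!: assms(2))
  finally show "(M * msum m p d f) $$ (i,k) = msum n p d (\<lambda>j. M * f j) $$ (i,k)" .
qed (insert assms, auto)

lemma mult_msum_left:
  assumes "M \<in> carrier_mat m p" "\<And>j. j < d \<Longrightarrow> f j \<in> carrier_mat n m"
  shows "msum n m d f * M = msum n p d (\<lambda>j. f j * M)"
proof (rule eq_matI)
  fix i k assume ik: "i < dim_row (msum n p d (\<lambda>j. f j * M))" "k < dim_col (msum n p d (\<lambda>j. f j * M))"
  hence i: "i < n" and k: "k < p" by auto
  have "(msum n m d f * M) $$ (i,k) = (\<Sum>l<m. (\<Sum>j<d. f j $$ (i,l)) * M $$ (l,k))"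
    using assms i k by (simp add: scalar_prod_def lessThan_atLeast0)
  also have "\<dots> = (\<Sum>j<d. \<Sum>l<m. f j $$ (i,l) * M $$ (l,k))"
    by (simp add: sum_distrib_right sum.swap[of _ "{..<m}"])
  also have "\<dots> = msum n p d (\<lambda>j. f j * M) $$ (i,k)"
    using assms(1) i k by (auto simp add: scalar_prod_def lessThan_atLeast0 intro!: sum.cong dest!: assms(2))
  finally show "(msum n m d f * M) $$ (i,k) = msum n p d (\<lambda>j. f j * M) $$ (i,k)" .
qed (insert assms, auto)

lemma smult_msum: assumes "\<And>j. j < d \<Longrightarrow> f j \<in> carrier_mat n m" shows "c \<cdot>\<^sub>m msum n m d f = msum n m d (\<lambda>j. c \<cdot>\<^sub>m f j)"
  by (rule eq_matI, auto simp: sum_distrib_left intro!: sum.cong dest!: assms)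

lemma ctrace_comm: assumes "M \<in> carrier_mat n m" "N \<in> carrier_mat m n"
  shows "ctrace (M * N) = ctrace (N * M)"
  unfolding ctrace_def using assms
  by (simp add: scalar_prod_def lessThan_atLeast0 sum.swap[of _ "{0..<n}"] mult.commute)



definition qf :: "nat \<Rightarrow> complex mat \<Rightarrow> (nat \<Rightarrow> complex) \<Rightarrow> (nat \<Rightarrow> complex) \<Rightarrow> complex" where
  "qf n R x y = (\<Sum>a<n. \<Sum>b<n. cnj (x a) * R $$ (a,b) * y b)"

lemma qf_herm: assumes "R \<in> carrier_mat n n" "cadj R = R"
  shows "cnj (qf n R x y) = qf n R y x"
proof -
  have h: "cnj (R $$ (a,b)) = R $$ (b,a)" if "a < n" "b < n" for a b
  proof -
    have "cadj R $$ (b,a) = cnj (R $$ (a,b))" using assms(1) that by simp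
    thus ?thesis using assms(2) by metis
  qed
  have "cnj (qf n R x y) = (\<Sum>a<n. \<Sum>b<n. x a * cnj (R $$ (a,b)) * cnj (y b))"
    unfolding qf_def by simp
  also have "\<dots> = (\<Sum>a<n. \<Sum>b<n. x a * R $$ (b,a) * cnj (y b))"
    using h by (auto intro!: sum.cong)
  also have "\<dots> = qf n R y x" unfolding qf_def
    by (subst sum.swap, auto intro!: sum.cong simp: mult.commute mult.left_commute)
  finally show ?thesis .
qed

lemma qf_expand: "qf n R (\<lambda>a. x a + c * y a) (\<lambda>a. x a + c * y a)
   = qf n R x x + c * qf n R x y + cnj c * qf n R y x + cnj c * c * qf n R y y"
  unfolding qf_def by (simp add: algebra_simps sum.distrib sum_distrib_left)

lemma qf_scale2: "qf n R x (\<lambda>a. c * y a) = c * qf n R x y"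
  unfolding qf_def by (simp add: algebra_simps sum_distrib_left)

lemma quad_nonneg_lin0:
  fixes a b :: real assumes "b \<ge> 0" "\<And>t. a * t + b * t^2 \<ge> 0" shows "a = 0"
proof (rule ccontr)
  assume a: "a \<noteq> 0"
  define t where "t = - a / (b + 1)"
  have pos: "b + 1 > 0" using assms(1) by simp
  have s: "t * (b+1) = -a" unfolding t_def using pos by simp
  have "(a * t + b * t^2) * (b+1)^2 = a * (t * (b+1)) * (b+1) + b * (t * (b+1))^2"
    by (simp add: algebra_simps power2_eq_square)
  also have "\<dots> = -(a^2)" unfolding s by (simp add: algebra_simps power2_eq_square)
  finally have e: "(a * t + b * t^2) * (b+1)^2 = -(a^2)" .
  moreover have "a^2 > 0" using a by simp
  moreover have "(b+1)^2 > 0" using pos by simp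
  ultimately have "a * t + b * t^2 < 0"
    by (metis mult_nonneg_nonneg neg_less_0_iff_less not_le order_less_le)
  thus False using assms(2)[of t] by simp
qed

lemma qf_zero:
  assumes R: "R \<in> carrier_mat n n" "cadj R = R"
    and pos: "\<And>x. Re (qf n R x x) \<ge> 0"
    and det: "det R \<noteq> 0"
    and w: "Re (qf n R w w) = 0"
  shows "\<forall>a<n. w a = 0"
proof -
  have orth: "qf n R w y = 0" for y
  proof -
    have c1: "Re (qf n R w (\<lambda>a. c * y a)) = 0" for c
    proof -
      have "Re (qf n R w (\<lambda>a. c * y a)) * 2 * t + Re (qf n R (\<lambda>a. c * y a) (\<lambda>a. c * y a)) * t^2 \<ge> 0" for t :: real
      proof -
        have e: "qf n R (\<lambda>a. w a + complex_of_real t * (c * y a)) (\<lambda>a. w a + complex_of_real t * (c * y a))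
          = qf n R w w + of_real t * qf n R w (\<lambda>a. c * y a) + of_real t * qf n R (\<lambda>a. c * y a) w
            + of_real t * of_real t * qf n R (\<lambda>a. c * y a) (\<lambda>a. c * y a)"
          using qf_expand[of n R w "of_real t" "\<lambda>a. c * y a"] by simp
        have h: "qf n R (\<lambda>a. c * y a) w = cnj (qf n R w (\<lambda>a. c * y a))" using qf_herm[OF R] by simp
        have "0 \<le> Re (qf n R (\<lambda>a. w a + complex_of_real t * (c * y a)) (\<lambda>a. w a + complex_of_real t * (c * y a)))"
          by (rule pos)
        also have "\<dots> = Re (qf n R w (\<lambda>a. c * y a)) * 2 * t + Re (qf n R (\<lambda>a. c * y a) (\<lambda>a. c * y a)) * t^2"
          unfolding e h using w by (simp add: power2_eq_square)
        finally show ?thesis .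
      qed
      thus ?thesis using quad_nonneg_lin0[of "Re (qf n R (\<lambda>a. c * y a) (\<lambda>a. c * y a))" "Re (qf n R w (\<lambda>a. c * y a)) * 2"] pos
        by (simp add: mult.commute mult.left_commute)
    qed
    have "Re (qf n R w y) = 0" using c1[of 1] by simp
    moreover have "Im (qf n R w y) = 0" using c1[of "\<i>"] by (simp add: qf_scale2)
    ultimately show ?thesis by (simp add: complex_eq_iff)
  qed
  define v where "v = vec n w"
  have v: "v \<in> carrier_vec n" unfolding v_def by simp
  have Rv: "R *\<^sub>v v = 0\<^sub>v n"
  proof -
    define z where "z = (\<lambda>a. (R *\<^sub>v v) $ a)"
    have "qf n R z w = cnj (qf n R w z)" using qf_herm[OF R] by simp
    hence "qf n R z w = 0" using orth by simp
    moreover have "qf n R z w = (\<Sum>a<n. cnj (z a) * z a)"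
    proof -
      have za: "z a = (\<Sum>b<n. R $$ (a,b) * w b)" if "a < n" for a
        using R v that unfolding z_def v_def by (simp add: scalar_prod_def lessThan_atLeast0)
      have "qf n R z w = (\<Sum>a<n. cnj (z a) * (\<Sum>b<n. R $$ (a,b) * w b))"
        unfolding qf_def by (simp add: sum_distrib_left mult.assoc)
      also have "\<dots> = (\<Sum>a<n. cnj (z a) * z a)" using za by simp
      finally show ?thesis .
    qed
    moreover have "(\<Sum>a<n. cnj (z a) * z a) = of_real (\<Sum>a<n. (cmod (z a))^2)"
    proof -
      have "cnj (z a) * z a = of_real ((cmod (z a))^2)" for a
        by (metis complex_norm_square mult.commute)
      thus ?thesis by (simp add: of_real_sum)
    qed
    ultimately have "complex_of_real (\<Sum>a<n. (cmod (z a))^2) = 0" by metis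
    hence "(\<Sum>a<n. (cmod (z a))^2) = 0" by (simp only: of_real_eq_0_iff)
    hence "\<forall>a<n. z a = 0" by (subst (asm) sum_nonneg_eq_0_iff, auto)
    thus ?thesis using R v unfolding z_def by (auto intro!: eq_vecI)
  qed
  have "v = 0\<^sub>v n" using det_0_iff_vec_prod_zero[OF R(1)] det v Rv by blast
  thus ?thesis unfolding v_def by (metis index_vec index_zero_vec(1))
qed



lemma ctrace_smult: "M \<in> carrier_mat n n \<Longrightarrow> ctrace (c \<cdot>\<^sub>m M) = c * ctrace M"
  unfolding ctrace_def by (auto simp: sum_distrib_left intro!: sum.cong)

lemma ctrace_msum: assumes "\<And>j. j < d \<Longrightarrow> f j \<in> carrier_mat n n"
  shows "ctrace (msum n n d f) = (\<Sum>j<d. ctrace (f j))"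
proof -
  have "ctrace (msum n n d f) = (\<Sum>i<n. \<Sum>j<d. f j $$ (i,i))" unfolding ctrace_def by simp
  also have "\<dots> = (\<Sum>j<d. \<Sum>i<n. f j $$ (i,i))" by (rule sum.swap)
  also have "\<dots> = (\<Sum>j<d. ctrace (f j))" unfolding ctrace_def
    apply (rule sum.cong[OF refl]) using assms by (metis carrier_matD(1) lessThan_iff)
  finally show ?thesis .
qed

lemma ctrace_msum_mult: assumes "\<And>j. j < d \<Longrightarrow> f j \<in> carrier_mat n n" "N \<in> carrier_mat n n"
  shows "(\<Sum>j<d. ctrace (f j * N)) = ctrace (msum n n d f * N)"
proof -
  have c: "f j * N \<in> carrier_mat n n" if "j < d" for j using assms(1)[OF that] assms(2) by simp
  show ?thesis by (subst mult_msum_left[OF assms(2) assms(1)], simp, subst ctrace_msum[OF c], auto)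
qed

definition sf :: "nat \<Rightarrow> complex mat \<Rightarrow> complex mat \<Rightarrow> complex mat \<Rightarrow> complex" where
  "sf n R X Z = (\<Sum>i<n. qf n R (\<lambda>a. cnj (X $$ (i,a))) (\<lambda>a. cnj (Z $$ (i,a))))"

lemma sf_ctrace: assumes "X \<in> carrier_mat n n" "Z \<in> carrier_mat n n" "R \<in> carrier_mat n n"
  shows "sf n R X Z = ctrace (X * R * cadj Z)"
proof -
  have "ctrace (X * R * cadj Z) = (\<Sum>i<n. \<Sum>b<n. (\<Sum>a<n. X $$ (i,a) * R $$ (a,b)) * cnj (Z $$ (i,b)))"
    unfolding ctrace_def using assms by (auto simp: scalar_prod_def lessThan_atLeast0 intro!: sum.cong)
  also have "\<dots> = (\<Sum>i<n. \<Sum>b<n. \<Sum>a<n. X $$ (i,a) * R $$ (a,b) * cnj (Z $$ (i,b)))"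
    by (simp add: sum_distrib_right)
  also have "\<dots> = (\<Sum>i<n. \<Sum>a<n. \<Sum>b<n. X $$ (i,a) * R $$ (a,b) * cnj (Z $$ (i,b)))"
    by (rule sum.cong[OF refl], rule sum.swap)
  also have "\<dots> = sf n R X Z" unfolding sf_def qf_def by simp
  finally show ?thesis by simp
qed

lemma sf_minus_left: assumes "X \<in> carrier_mat n n" "Y \<in> carrier_mat n n"
  shows "sf n R (X - c \<cdot>\<^sub>m Y) Z = sf n R X Z - c * sf n R Y Z"
  unfolding sf_def qf_def using assms
  by (simp add: algebra_simps sum_subtractf sum_distrib_left)

lemma sf_minus_right: assumes "X \<in> carrier_mat n n" "Y \<in> carrier_mat n n"
  shows "sf n R Z (X - c \<cdot>\<^sub>m Y) = sf n R Z X - cnj c * sf n R Z Y"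
  unfolding sf_def qf_def using assms
  by (simp add: algebra_simps sum_subtractf sum_distrib_left)

lemma sf_herm: assumes "R \<in> carrier_mat n n" "cadj R = R"
  shows "cnj (sf n R X Z) = sf n R Z X"
  unfolding sf_def using qf_herm[OF assms] by simp

lemma density_qf: assumes "density_mat n R" shows "Re (qf n R x x) \<ge> 0"
proof -
  have R: "R \<in> carrier_mat n n" using assms unfolding density_mat_def by auto
  have "conjugate (vec n x) \<bullet> (R *\<^sub>v vec n x) = qf n R x x"
    unfolding qf_def using R
    by (simp add: scalar_prod_def lessThan_atLeast0 sum_distrib_left mult.assoc)
  thus ?thesis using assms unfolding density_mat_def by (metis vec_carrier)
qed

lemma sf_pos: assumes "density_mat n R" shows "Re (sf n R X X) \<ge> 0"
  unfolding sf_def using density_qf[OF assms] by (simp add: sum_nonneg)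

lemma sf_zero: assumes "density_mat n R" "det R \<noteq> 0" "X \<in> carrier_mat n n"
  "Re (sf n R X X) = 0" shows "X = 0\<^sub>m n n"
proof -
  have R: "R \<in> carrier_mat n n" "cadj R = R" using assms unfolding density_mat_def by auto
  have "\<forall>i<n. Re (qf n R (\<lambda>a. cnj (X $$ (i,a))) (\<lambda>a. cnj (X $$ (i,a)))) = 0"
    using assms(4) density_qf[OF assms(1)] unfolding sf_def
    by (subst (asm) Re_sum, subst (asm) sum_nonneg_eq_0_iff, auto)
  hence "\<forall>i<n. \<forall>a<n. cnj (X $$ (i,a)) = 0"
    using qf_zero[OF R _ assms(2)] density_qf[OF assms(1)] by blast
  thus ?thesis using assms(3) by (auto intro!: eq_matI)
qed



lemma sum_pairs:
  fixes g :: "nat \<Rightarrow> 'a::comm_monoid_add"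
  shows "(\<Sum>l<n*D. g l) = (\<Sum>a<n. \<Sum>b<D. g (a*D+b))"
proof -
  have "(\<Sum>a<n. \<Sum>b<D. g (a*D+b)) = (\<Sum>(a,b)\<in>{..<n}\<times>{..<D}. g (a*D+b))"
    by (simp add: sum.cartesian_product)
  also have "\<dots> = (\<Sum>l<n*D. g l)"
  proof (rule sum.reindex_bij_witness[where i = "\<lambda>l. (l div D, l mod D)" and j = "\<lambda>(a,b). a*D+b"])
    fix l assume l: "l \<in> {..<n*D}"
    hence D: "D > 0" by (cases D, auto)
    show "(\<lambda>(a,b). a*D+b) (l div D, l mod D) = l" by simp
    show "(l div D, l mod D) \<in> {..<n}\<times>{..<D}" using l D
      by (auto simp: less_mult_imp_div_less)
  next
    fix ab assume ab: "ab \<in> {..<n}\<times>{..<D}"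
    obtain a b where ab': "ab = (a,b)" by force
    with ab have a: "a < n" and b: "b < D" by auto
    show "((\<lambda>(a,b). a*D+b) ab div D, (\<lambda>(a,b). a*D+b) ab mod D) = ab" using ab' b by simp
    have "a*D+b < a*D + D" using b by simp
    also have "\<dots> = Suc a * D" by simp
    also have "\<dots> \<le> n * D" using a by (intro mult_right_mono, auto)
    finally show "(\<lambda>(a,b). a*D+b) ab \<in> {..<n*D}" using ab' by simp
    show "g ((\<lambda>(a,b). a*D+b) ab) = (case ab of (a,b) \<Rightarrow> g (a*D+b))"
      using ab' by simp
  qed
  finally show ?thesis by simp
qed

definition Bm :: "nat \<Rightarrow> nat \<Rightarrow> complex mat \<Rightarrow> (nat \<Rightarrow> complex mat) \<Rightarrow> nat \<Rightarrow> complex mat" where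
  "Bm d D u A j = msum D D d (\<lambda>k. u $$ (j,k) \<cdot>\<^sub>m A k)"

lemma Bm_carrier[simp]: "Bm d D u A j \<in> carrier_mat D D" unfolding Bm_def by simp

lemma Bm_index: assumes "\<And>k. k < d \<Longrightarrow> A k \<in> carrier_mat D D" "a < D" "q < D"
  shows "Bm d D u A j $$ (a,q) = (\<Sum>k<d. u $$ (j,k) * A k $$ (a,q))"
  unfolding Bm_def using assms(2,3) by (auto intro!: sum.cong dest!: assms(1))

lemma triple_index: assumes "X \<in> carrier_mat n n" "M \<in> carrier_mat n n" "Y \<in> carrier_mat n n" "p < n" "q < n"
  shows "(cadj X * M * Y) $$ (p,q) = (\<Sum>a<n. \<Sum>b<n. cnj (X $$ (a,p)) * M $$ (a,b) * Y $$ (b,q))"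
proof -
  have "(cadj X * M * Y) $$ (p,q) = (\<Sum>b<n. (\<Sum>a<n. cnj (X $$ (a,p)) * M $$ (a,b)) * Y $$ (b,q))"
    using assms by (auto simp: scalar_prod_def lessThan_atLeast0 intro!: sum.cong)
  also have "\<dots> = (\<Sum>b<n. \<Sum>a<n. cnj (X $$ (a,p)) * M $$ (a,b) * Y $$ (b,q))"
    by (simp add: sum_distrib_right)
  also have "\<dots> = (\<Sum>a<n. \<Sum>b<n. cnj (X $$ (a,p)) * M $$ (a,b) * Y $$ (b,q))"
    by (rule sum.swap)
  finally show ?thesis .
qed

lemma transfer_u_index: assumes "\<And>k. k < d \<Longrightarrow> A k \<in> carrier_mat D D" "i < D*D" "l < D*D"
  shows "transfer_u d D u A $$ (i,l) = (\<Sum>j<d. \<Sum>k<d. u $$ (j,k) * (A k $$ (i div D, l div D) * cnj (A j $$ (i mod D, l mod D))))"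
proof -
  have D: "D > 0" using assms(2) by (cases D, auto)
  have idx: "i div D < D" "l div D < D" "i mod D < D" "l mod D < D"
    using assms(2,3) D by (auto simp: less_mult_imp_div_less)
  have t: "(u $$ (j,k) \<cdot>\<^sub>m kron (A k) (cconj (A j))) $$ (i,l)
     = u $$ (j,k) * (A k $$ (i div D, l div D) * cnj (A j $$ (i mod D, l mod D)))" if "j < d" "k < d" for j k
    using assms(1)[OF that(1)] assms(1)[OF that(2)] assms(2,3) idx by (simp add: kron_def cconj_def)
  show ?thesis unfolding transfer_u_def using assms(2,3) t by (simp)
qed

lemma transfer_u_carrier[simp]: "transfer_u d D u A \<in> carrier_mat (D*D) (D*D)"
  unfolding transfer_u_def by simp

lemma unitary_col: assumes "unitary_cmat d u" "k < d" "l < d"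
  shows "(\<Sum>j<d. cnj (u $$ (j,k)) * u $$ (j,l)) = (if k = l then 1 else 0)"
proof -
  have u: "u \<in> carrier_mat d d" and e: "cadj u * u = 1\<^sub>m d" using assms(1) unfolding unitary_cmat_def by auto
  have "(cadj u * u) $$ (k,l) = (\<Sum>j<d. cnj (u $$ (j,k)) * u $$ (j,l))"
    using u assms by (auto simp: scalar_prod_def lessThan_atLeast0 intro!: sum.cong)
  thus ?thesis using e assms by simp
qed

lemma unitary_bilin: assumes "unitary_cmat d u"
  shows "(\<Sum>j<d. (\<Sum>k<d. cnj (u $$ (j,k)) * x k) * (\<Sum>l<d. u $$ (j,l) * y l)) = (\<Sum>k<d. x k * y k)"
proof -
  have "(\<Sum>j<d. (\<Sum>k<d. cnj (u $$ (j,k)) * x k) * (\<Sum>l<d. u $$ (j,l) * y l))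
      = (\<Sum>j<d. \<Sum>k<d. \<Sum>l<d. x k * y l * (cnj (u $$ (j,k)) * u $$ (j,l)))"
    by (simp add: sum_distrib_left sum_distrib_right mult_ac)
  also have "\<dots> = (\<Sum>k<d. \<Sum>l<d. x k * y l * (\<Sum>j<d. cnj (u $$ (j,k)) * u $$ (j,l)))"
    by (subst sum.swap, rule sum.cong[OF refl], subst sum.swap, simp add: sum_distrib_left)
  also have "\<dots> = (\<Sum>k<d. \<Sum>l<d. x k * y l * (if k = l then 1 else 0))"
    using unitary_col[OF assms] by (auto intro!: sum.cong)
  also have "\<dots> = (\<Sum>k<d. x k * y k)" by (simp add: if_distrib cong: if_cong)
  finally show ?thesis .
qed



lemma transfer_u_dims[simp]: "dim_row (transfer_u d D u A) = D*D" "dim_col (transfer_u d D u A) = D*D"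
  unfolding transfer_u_def by auto

lemma sum3_swap: "(\<Sum>j<d. \<Sum>a<n. \<Sum>b<m. f j a b) = (\<Sum>a<n. \<Sum>b<m. \<Sum>j<d. (f j a b :: 'a::comm_monoid_add))"
  by (subst sum.swap, rule sum.cong[OF refl], rule sum.swap)

lemma triple_index2: assumes "P \<in> carrier_mat n n" "X \<in> carrier_mat n n" "Q \<in> carrier_mat n n" "p < n" "q < n"
  shows "(P * X * cadj Q) $$ (p,q) = (\<Sum>a<n. \<Sum>b<n. P $$ (p,a) * X $$ (a,b) * cnj (Q $$ (q,b)))"
proof -
  have "(P * X * cadj Q) $$ (p,q) = (\<Sum>b<n. (\<Sum>a<n. P $$ (p,a) * X $$ (a,b)) * cnj (Q $$ (q,b)))"
    using assms by (auto simp: scalar_prod_def lessThan_atLeast0 intro!: sum.cong)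
  also have "\<dots> = (\<Sum>b<n. \<Sum>a<n. P $$ (p,a) * X $$ (a,b) * cnj (Q $$ (q,b)))"
    by (simp add: sum_distrib_right)
  also have "\<dots> = (\<Sum>a<n. \<Sum>b<n. P $$ (p,a) * X $$ (a,b) * cnj (Q $$ (q,b)))"
    by (rule sum.swap)
  finally show ?thesis .
qed

lemma bm_conj_sum:
  assumes A: "\<And>k. k < d \<Longrightarrow> A k \<in> carrier_mat D D" and U: "unitary_cmat d u" and M: "M \<in> carrier_mat D D"
  shows "msum D D d (\<lambda>j. cadj (Bm d D u A j) * M * Bm d D u A j) = msum D D d (\<lambda>j. cadj (A j) * M * A j)"
proof (rule eq_matI)
  fix p q assume "p < dim_row (msum D D d (\<lambda>j. cadj (A j) * M * A j))" "q < dim_col (msum D D d (\<lambda>j. cadj (A j) * M * A j))"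
  hence p: "p < D" and q: "q < D" by auto
  have "msum D D d (\<lambda>j. cadj (Bm d D u A j) * M * Bm d D u A j) $$ (p,q)
     = (\<Sum>j<d. \<Sum>a<D. \<Sum>b<D. cnj (Bm d D u A j $$ (a,p)) * M $$ (a,b) * Bm d D u A j $$ (b,q))"
    using p q M by (simp add: triple_index[OF Bm_carrier M Bm_carrier])
  also have "\<dots> = (\<Sum>a<D. \<Sum>b<D. \<Sum>j<d. cnj (Bm d D u A j $$ (a,p)) * M $$ (a,b) * Bm d D u A j $$ (b,q))"
    by (rule sum3_swap)
  also have "\<dots> = (\<Sum>a<D. \<Sum>b<D. M $$ (a,b) * (\<Sum>j<d. (\<Sum>k<d. cnj (u $$ (j,k)) * cnj (A k $$ (a,p))) * (\<Sum>l<d. u $$ (j,l) * A l $$ (b,q))))"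
    using p q by (auto simp: Bm_index[OF A] sum_distrib_left mult_ac intro!: sum.cong)
  also have "\<dots> = (\<Sum>a<D. \<Sum>b<D. M $$ (a,b) * (\<Sum>k<d. cnj (A k $$ (a,p)) * A k $$ (b,q)))"
    by (simp add: unitary_bilin[OF U])
  also have "\<dots> = (\<Sum>a<D. \<Sum>b<D. \<Sum>k<d. cnj (A k $$ (a,p)) * M $$ (a,b) * A k $$ (b,q))"
    by (simp add: sum_distrib_left mult_ac)
  also have "\<dots> = (\<Sum>k<d. \<Sum>a<D. \<Sum>b<D. cnj (A k $$ (a,p)) * M $$ (a,b) * A k $$ (b,q))"
    by (rule sum3_swap[symmetric])
  also have "\<dots> = msum D D d (\<lambda>j. cadj (A j) * M * A j) $$ (p,q)"
    using p q M by (auto simp: triple_index[OF A M A] intro!: sum.cong)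
  finally show "msum D D d (\<lambda>j. cadj (Bm d D u A j) * M * Bm d D u A j) $$ (p,q) = msum D D d (\<lambda>j. cadj (A j) * M * A j) $$ (p,q)" .
qed auto

lemma left_eig_identity:
  assumes A: "\<And>k. k < d \<Longrightarrow> A k \<in> carrier_mat D D"
    and y: "y \<in> carrier_vec (D*D)"
    and ev: "transpose_mat (transfer_u d D u A) *\<^sub>v y = z \<cdot>\<^sub>v y"
  shows "msum D D d (\<lambda>j. cadj (A j) * mat D D (\<lambda>(p,q). y $ (q*D+p)) * Bm d D u A j)
       = z \<cdot>\<^sub>m mat D D (\<lambda>(p,q). y $ (q*D+p))"
    (is "msum D D d (\<lambda>j. cadj (A j) * ?Y * Bm d D u A j) = _")
proof (rule eq_matI)
  fix p q assume "p < dim_row (z \<cdot>\<^sub>m ?Y)" "q < dim_col (z \<cdot>\<^sub>m ?Y)"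
  hence p: "p < D" and q: "q < D" by auto
  have lt: "q*D+p < D*D"
  proof -
    have "q*D+p < q*D + D" using p by simp
    also have "\<dots> = Suc q * D" by simp
    also have "\<dots> \<le> D * D" using q by (intro mult_right_mono, auto)
    finally show ?thesis .
  qed
  have bl: "b*D+a < D*D" if "a < D" "b < D" for a b
  proof -
    have "b*D+a < b*D + D" using that by simp
    also have "\<dots> = Suc b * D" by simp
    also have "\<dots> \<le> D * D" using that by (intro mult_right_mono, auto)
    finally show ?thesis .
  qed
  have "z * y $ (q*D+p) = (transpose_mat (transfer_u d D u A) *\<^sub>v y) $ (q*D+p)"
    using ev y lt by simp
  also have "\<dots> = (\<Sum>i<D*D. transfer_u d D u A $$ (i, q*D+p) * y $ i)"
    using y lt by (auto simp: scalar_prod_def lessThan_atLeast0 intro!: sum.cong)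
  also have "\<dots> = (\<Sum>b<D. \<Sum>a<D. transfer_u d D u A $$ (b*D+a, q*D+p) * y $ (b*D+a))"
    by (rule sum_pairs)
  also have "\<dots> = (\<Sum>b<D. \<Sum>a<D. \<Sum>j<d. \<Sum>k<d. u $$ (j,k) * (A k $$ (b, q) * cnj (A j $$ (a, p))) * y $ (b*D+a))"
    using p q bl lt by (auto simp: transfer_u_index[OF A] sum_distrib_right intro!: sum.cong)
  also have "\<dots> = (\<Sum>a<D. \<Sum>b<D. \<Sum>j<d. \<Sum>k<d. u $$ (j,k) * (A k $$ (b, q) * cnj (A j $$ (a, p))) * y $ (b*D+a))"
    by (rule sum.swap)
  also have "\<dots> = (\<Sum>j<d. \<Sum>a<D. \<Sum>b<D. \<Sum>k<d. u $$ (j,k) * (A k $$ (b, q) * cnj (A j $$ (a, p))) * y $ (b*D+a))"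
    by (rule sum3_swap[symmetric])
  also have "\<dots> = (\<Sum>j<d. \<Sum>a<D. \<Sum>b<D. cnj (A j $$ (a,p)) * ?Y $$ (a,b) * Bm d D u A j $$ (b,q))"
    using p q by (auto simp: Bm_index[OF A] sum_distrib_left mult_ac intro!: sum.cong)
  also have "\<dots> = msum D D d (\<lambda>j. cadj (A j) * ?Y * Bm d D u A j) $$ (p,q)"
    using p q by (auto simp: triple_index[OF A] intro!: sum.cong)
  finally show "msum D D d (\<lambda>j. cadj (A j) * ?Y * Bm d D u A j) $$ (p,q) = (z \<cdot>\<^sub>m ?Y) $$ (p,q)"
    using p q by simp
qed auto

lemma right_eig_identity:
  assumes A: "\<And>k. k < d \<Longrightarrow> A k \<in> carrier_mat D D" and X: "X \<in> carrier_mat D D"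
  shows "transfer_u d D u A *\<^sub>v vec (D*D) (\<lambda>l. X $$ (l div D, l mod D))
       = vec (D*D) (\<lambda>i. msum D D d (\<lambda>j. Bm d D u A j * X * cadj (A j)) $$ (i div D, i mod D))"
proof (rule eq_vecI)
  fix i assume "i < dim_vec (vec (D*D) (\<lambda>i. msum D D d (\<lambda>j. Bm d D u A j * X * cadj (A j)) $$ (i div D, i mod D)))"
  hence i: "i < D*D" by simp
  have D: "D > 0" using i by (cases D, auto)
  define p where "p = i div D"
  define q where "q = i mod D"
  have p: "p < D" and q: "q < D" using i D unfolding p_def q_def by (auto simp: less_mult_imp_div_less)
  have bl: "a*D+b < D*D" if "a < D" "b < D" for a b
  proof -
    have "a*D+b < a*D + D" using that by simp
    also have "\<dots> = Suc a * D" by simp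
    also have "\<dots> \<le> D * D" using that by (intro mult_right_mono, auto)
    finally show ?thesis .
  qed
  have "(transfer_u d D u A *\<^sub>v vec (D*D) (\<lambda>l. X $$ (l div D, l mod D))) $ i
     = (\<Sum>l<D*D. transfer_u d D u A $$ (i, l) * X $$ (l div D, l mod D))"
    using i by (auto simp: scalar_prod_def lessThan_atLeast0 intro!: sum.cong)
  also have "\<dots> = (\<Sum>a<D. \<Sum>b<D. transfer_u d D u A $$ (i, a*D+b) * X $$ ((a*D+b) div D, (a*D+b) mod D))"
    by (rule sum_pairs)
  also have "\<dots> = (\<Sum>a<D. \<Sum>b<D. \<Sum>j<d. \<Sum>k<d. u $$ (j,k) * (A k $$ (p, a) * cnj (A j $$ (q, b))) * X $$ (a,b))"
    using i bl unfolding p_def q_def by (auto simp: transfer_u_index[OF A] sum_distrib_right intro!: sum.cong)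
  also have "\<dots> = (\<Sum>j<d. \<Sum>a<D. \<Sum>b<D. \<Sum>k<d. u $$ (j,k) * (A k $$ (p, a) * cnj (A j $$ (q, b))) * X $$ (a,b))"
    by (rule sum3_swap[symmetric])
  also have "\<dots> = (\<Sum>j<d. \<Sum>a<D. \<Sum>b<D. Bm d D u A j $$ (p,a) * X $$ (a,b) * cnj (A j $$ (q,b)))"
    using p q by (auto simp: Bm_index[OF A] sum_distrib_left sum_distrib_right mult_ac intro!: sum.cong)
  also have "\<dots> = msum D D d (\<lambda>j. Bm d D u A j * X * cadj (A j)) $$ (p,q)"
    using p q X by (auto simp: triple_index2[OF _ _ A] intro!: sum.cong)
  finally show "(transfer_u d D u A *\<^sub>v vec (D*D) (\<lambda>l. X $$ (l div D, l mod D))) $ i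
     = vec (D*D) (\<lambda>i. msum D D d (\<lambda>j. Bm d D u A j * X * cadj (A j)) $$ (i div D, i mod D)) $ i"
    using i unfolding p_def q_def by simp
qed auto



lemma sqm: "X \<in> carrier_mat n n \<Longrightarrow> Y \<in> carrier_mat n n \<Longrightarrow> X * Y \<in> carrier_mat n n"
  by simp

lemma ctrace_rot3: assumes "X1 \<in> carrier_mat n n" "X2 \<in> carrier_mat n n" "X3 \<in> carrier_mat n n"
  shows "ctrace (X1 * X2 * X3) = ctrace (X2 * X3 * X1)"
  using ctrace_comm[of X1 n n "X2 * X3"] assms by (simp add: assoc_mult_mat[of _ n n _ n _ n] sqm cadj_carrier[of _ n n])

lemma e1: assumes "Y \<in> carrier_mat n n" "B \<in> carrier_mat n n" "R \<in> carrier_mat n n"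
  shows "sf n R (Y*B) (Y*B) = ctrace ((cadj B * (cadj Y * Y) * B) * R)"
proof -
  have "sf n R (Y*B) (Y*B) = ctrace (Y * (B * R * cadj B * cadj Y))"
    using assms by (simp add: sf_ctrace cadj_mult[of Y n n B n] assoc_mult_mat[of _ n n _ n _ n] sqm cadj_carrier[of _ n n])
  also have "\<dots> = ctrace ((B * R * cadj B * cadj Y) * Y)"
    using assms by (intro ctrace_comm[of _ n n], auto)
  also have "\<dots> = ctrace (B * (R * cadj B * (cadj Y * Y)))"
    using assms by (simp add: assoc_mult_mat[of _ n n _ n _ n] sqm cadj_carrier[of _ n n])
  also have "\<dots> = ctrace ((R * cadj B * (cadj Y * Y)) * B)"
    using assms by (intro ctrace_comm[of _ n n], auto)
  also have "\<dots> = ctrace (R * (cadj B * (cadj Y * Y) * B))"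
    using assms by (simp add: assoc_mult_mat[of _ n n _ n _ n] sqm cadj_carrier[of _ n n])
  also have "\<dots> = ctrace ((cadj B * (cadj Y * Y) * B) * R)"
    using assms by (intro ctrace_comm[of _ n n], auto)
  finally show ?thesis .
qed

lemma e2: assumes "Y \<in> carrier_mat n n" "B \<in> carrier_mat n n" "R \<in> carrier_mat n n" "A \<in> carrier_mat n n"
  shows "sf n R (Y*B) (A*Y) = ctrace ((cadj A * Y * B) * (R * cadj Y))"
proof -
  have "sf n R (Y*B) (A*Y) = ctrace ((Y * B * R * cadj Y) * cadj A)"
    using assms by (simp add: sf_ctrace cadj_mult[of A n n Y n] assoc_mult_mat[of _ n n _ n _ n] sqm cadj_carrier[of _ n n])
  also have "\<dots> = ctrace (cadj A * (Y * B * R * cadj Y))"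
    using assms by (intro ctrace_comm[of _ n n], auto)
  also have "\<dots> = ctrace ((cadj A * Y * B) * (R * cadj Y))"
    using assms by (simp add: assoc_mult_mat[of _ n n _ n _ n] sqm cadj_carrier[of _ n n])
  finally show ?thesis .
qed

lemma e4: assumes "Y \<in> carrier_mat n n" "R \<in> carrier_mat n n" "A \<in> carrier_mat n n"
  shows "sf n R (A*Y) (A*Y) = ctrace ((cadj A * A) * (Y * R * cadj Y))"
proof -
  have "sf n R (A*Y) (A*Y) = ctrace (A * (Y * R * cadj Y * cadj A))"
    using assms by (simp add: sf_ctrace cadj_mult[of A n n Y n] assoc_mult_mat[of _ n n _ n _ n] sqm cadj_carrier[of _ n n])
  also have "\<dots> = ctrace ((Y * R * cadj Y * cadj A) * A)"
    using assms by (intro ctrace_comm[of _ n n], auto)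
  also have "\<dots> = ctrace ((Y * R * cadj Y) * (cadj A * A))"
    using assms by (simp add: assoc_mult_mat[of _ n n _ n _ n] sqm cadj_carrier[of _ n n])
  also have "\<dots> = ctrace ((cadj A * A) * (Y * R * cadj Y))"
    using assms by (intro ctrace_comm[of _ n n], auto)
  finally show ?thesis .
qed

lemma e5: assumes "M \<in> carrier_mat n n" "R \<in> carrier_mat n n" "A \<in> carrier_mat n n"
  shows "ctrace ((cadj A * M * A) * R) = ctrace ((A * R * cadj A) * M)"
proof -
  have "ctrace ((cadj A * M * A) * R) = ctrace (cadj A * (M * A * R))"
    using assms by (simp add: assoc_mult_mat[of _ n n _ n _ n] sqm cadj_carrier[of _ n n])
  also have "\<dots> = ctrace ((M * A * R) * cadj A)"
    using assms by (intro ctrace_comm[of _ n n], auto)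
  also have "\<dots> = ctrace (M * (A * R * cadj A))"
    using assms by (simp add: assoc_mult_mat[of _ n n _ n _ n] sqm cadj_carrier[of _ n n])
  also have "\<dots> = ctrace ((A * R * cadj A) * M)"
    using assms by (intro ctrace_comm[of _ n n], auto)
  finally show ?thesis .
qed

lemma e6: assumes "Y \<in> carrier_mat n n" "R \<in> carrier_mat n n"
  shows "sf n R Y Y = ctrace (R * (cadj Y * Y))"
proof -
  have "sf n R Y Y = ctrace (Y * (R * cadj Y))"
    using assms by (simp add: sf_ctrace assoc_mult_mat[of _ n n _ n _ n] sqm cadj_carrier[of _ n n])
  also have "\<dots> = ctrace ((R * cadj Y) * Y)"
    using assms by (intro ctrace_comm[of _ n n], auto)
  also have "\<dots> = ctrace (R * (cadj Y * Y))"
    using assms by (simp add: assoc_mult_mat[of _ n n _ n _ n] sqm cadj_carrier[of _ n n])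
  finally show ?thesis .
qed



lemma backward:
  assumes A: "\<And>k. k < d \<Longrightarrow> A k \<in> carrier_mat D D"
    and inj: "injective_mps d D A"
    and v: "unitary_cmat D v"
    and hyp: "\<forall>j<d. Bm d D u A j = c \<cdot>\<^sub>m (v * A j * cadj v)"
  shows "eigenvalue (transfer_u d D u A) c"
proof -
  obtain \<rho> where rho: "density_mat D \<rho>" and fixp: "msum D D d (\<lambda>j. A j * \<rho> * cadj (A j)) = \<rho>"
    using inj unfolding injective_mps_def by blast
  have rc: "\<rho> \<in> carrier_mat D D" and tr: "ctrace \<rho> = 1" using rho unfolding density_mat_def by auto
  have vc: "v \<in> carrier_mat D D" and vv: "cadj v * v = 1\<^sub>m D" using v unfolding unitary_cmat_def by auto
  define X where "X = v * \<rho>"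
  have Xc: "X \<in> carrier_mat D D" unfolding X_def using vc rc by simp
  have trm: "Bm d D u A j * X * cadj (A j) = c \<cdot>\<^sub>m (v * (A j * \<rho> * cadj (A j)))" if j: "j < d" for j
  proof -
    have Aj: "A j \<in> carrier_mat D D" using A j .
    have "Bm d D u A j * X * cadj (A j) = (c \<cdot>\<^sub>m (v * A j * cadj v)) * (v * \<rho>) * cadj (A j)"
      using hyp j unfolding X_def by simp
    also have "\<dots> = c \<cdot>\<^sub>m (v * A j * (cadj v * v) * \<rho> * cadj (A j))"
      using Aj vc rc by (simp add: mult_smult_assoc_mat[of _ D D _ D] assoc_mult_mat[of _ D D _ D _ D] sqm cadj_carrier[of _ D D])
    also have "\<dots> = c \<cdot>\<^sub>m (v * (A j * \<rho> * cadj (A j)))"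
      using Aj vc rc vv by (simp add: assoc_mult_mat[of _ D D _ D _ D] sqm cadj_carrier[of _ D D])
    finally show ?thesis .
  qed
  have S: "msum D D d (\<lambda>j. Bm d D u A j * X * cadj (A j)) = c \<cdot>\<^sub>m X"
  proof -
    have "msum D D d (\<lambda>j. Bm d D u A j * X * cadj (A j)) = msum D D d (\<lambda>j. c \<cdot>\<^sub>m (v * (A j * \<rho> * cadj (A j))))"
      by (rule msum_cong, rule trm)
    also have "\<dots> = c \<cdot>\<^sub>m msum D D d (\<lambda>j. v * (A j * \<rho> * cadj (A j)))"
      by (rule smult_msum[symmetric], insert A vc rc, simp add: sqm cadj_carrier[of _ D D])
    also have "msum D D d (\<lambda>j. v * (A j * \<rho> * cadj (A j))) = v * msum D D d (\<lambda>j. A j * \<rho> * cadj (A j))"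
      by (rule mult_msum_right[symmetric], insert A vc rc, auto simp: sqm cadj_carrier[of _ D D])
    finally show ?thesis using fixp unfolding X_def by simp
  qed
  define x where "x = vec (D*D) (\<lambda>l. X $$ (l div D, l mod D))"
  have Ex: "transfer_u d D u A *\<^sub>v x = c \<cdot>\<^sub>v x"
  proof -
    have "transfer_u d D u A *\<^sub>v x = vec (D*D) (\<lambda>i. (c \<cdot>\<^sub>m X) $$ (i div D, i mod D))"
      unfolding x_def using right_eig_identity[OF A Xc, where u = u] S by simp
    also have "\<dots> = c \<cdot>\<^sub>v x" unfolding x_def
    proof (rule eq_vecI)
      fix i assume "i < dim_vec (c \<cdot>\<^sub>v vec (D * D) (\<lambda>l. X $$ (l div D, l mod D)))"
      hence i: "i < D*D" by simp
      hence D: "D > 0" by (cases D, auto)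
      have "i div D < D" "i mod D < D" using i D by (auto simp: less_mult_imp_div_less)
      thus "vec (D * D) (\<lambda>i. (c \<cdot>\<^sub>m X) $$ (i div D, i mod D)) $ i = (c \<cdot>\<^sub>v vec (D * D) (\<lambda>l. X $$ (l div D, l mod D))) $ i"
        using i Xc by simp
    qed simp
    finally show ?thesis .
  qed
  have xnz: "x \<noteq> 0\<^sub>v (D*D)"
  proof
    assume x0: "x = 0\<^sub>v (D*D)"
    have "X = 0\<^sub>m D D"
    proof (rule eq_matI)
      fix a b assume "a < dim_row (0\<^sub>m D D :: complex mat)" "b < dim_col (0\<^sub>m D D :: complex mat)"
      hence a: "a < D" and b: "b < D" by auto
      have lt: "a*D+b < D*D"
      proof -
        have "a*D+b < a*D + D" using b by simp
        also have "\<dots> = Suc a * D" by simp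
        also have "\<dots> \<le> D * D" using a by (intro mult_right_mono, auto)
        finally show ?thesis .
      qed
      have "x $ (a*D+b) = X $$ (a,b)" unfolding x_def using lt b by simp
      thus "X $$ (a,b) = 0\<^sub>m D D $$ (a,b)" using x0 lt a b by simp
    qed (insert Xc, auto)
    hence "cadj v * X = 0\<^sub>m D D" using vc by simp
    moreover have "cadj v * X = \<rho>" unfolding X_def using vc rc vv
      by (simp add: assoc_mult_mat[of _ D D _ D _ D, symmetric] cadj_carrier[of _ D D])
    ultimately have "\<rho> = 0\<^sub>m D D" by simp
    hence "ctrace \<rho> = 0" unfolding ctrace_def by simp
    thus False using tr by simp
  qed
  show ?thesis unfolding eigenvalue_def eigenvector_def
    by (rule exI[of _ x], insert Ex xnz, simp add: x_def)
qed



lemma smult_smult_m: "a \<cdot>\<^sub>m (b \<cdot>\<^sub>m (M :: complex mat)) = (a * b) \<cdot>\<^sub>m M"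
  by (rule eq_matI, auto)

lemma smult_one_m: "1 \<cdot>\<^sub>m (M :: complex mat) = M"
  by (rule eq_matI, auto)

lemma forward:
  assumes A: "\<And>k. k < d \<Longrightarrow> A k \<in> carrier_mat D D"
    and inj: "injective_mps d D A"
    and U: "unitary_cmat d u"
    and ev: "eigenvalue (transfer_u d D u A) z" and z1: "cmod z = 1"
  shows "\<exists>v. unitary_cmat D v \<and> (\<forall>j<d. Bm d D u A j = z \<cdot>\<^sub>m (v * A j * cadj v))"
proof -
  let ?E = "transfer_u d D u A"
  have E: "?E \<in> carrier_mat (D*D) (D*D)" by simp
  have ET: "transpose_mat ?E \<in> carrier_mat (D*D) (D*D)" by simp
  have "eigenvalue (transpose_mat ?E) z"
    using ev eigenvalue_root_char_poly[OF E] eigenvalue_root_char_poly[OF ET] char_poly_transpose_mat[OF E] by simp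
  then obtain y where "eigenvector (transpose_mat ?E) y z" unfolding eigenvalue_def by blast
  hence y: "y \<in> carrier_vec (D*D)" "y \<noteq> 0\<^sub>v (D*D)" "transpose_mat ?E *\<^sub>v y = z \<cdot>\<^sub>v y"
    unfolding eigenvector_def by auto
  define Y where "Y = mat D D (\<lambda>(p,q). y $ (q*D+p))"
  have Yc: "Y \<in> carrier_mat D D" unfolding Y_def by simp
  have Psi: "msum D D d (\<lambda>j. cadj (A j) * Y * Bm d D u A j) = z \<cdot>\<^sub>m Y"
    unfolding Y_def by (rule left_eig_identity[OF A y(1) y(3)])
  have Ynz: "Y \<noteq> 0\<^sub>m D D"
  proof
    assume Y0: "Y = 0\<^sub>m D D"
    have "y = 0\<^sub>v (D*D)"
    proof (rule eq_vecI)
      fix l assume "l < dim_vec (0\<^sub>v (D*D) :: complex vec)"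
      hence l: "l < D*D" by simp
      hence D: "D > 0" by (cases D, auto)
      have pq: "l mod D < D" "l div D < D" using l D by (auto simp: less_mult_imp_div_less)
      have "Y $$ (l mod D, l div D) = y $ (l div D * D + l mod D)" unfolding Y_def using pq by simp
      also have "l div D * D + l mod D = l" by simp
      finally show "y $ l = 0\<^sub>v (D*D) $ l" using Y0 pq l by simp
    qed (insert y(1), simp)
    thus False using y(2) by simp
  qed
  obtain \<rho> where rho: "density_mat D \<rho>" and fixp: "msum D D d (\<lambda>j. A j * \<rho> * cadj (A j)) = \<rho>"
      and det: "det \<rho> \<noteq> 0"
    using inj unfolding injective_mps_def by blast
  have LC: "msum D D d (\<lambda>j. cadj (A j) * A j) = 1\<^sub>m D"
    using inj unfolding injective_mps_def left_canonical_def by blast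
  have uniq: "\<And>X. X \<in> carrier_mat D D \<Longrightarrow> msum D D d (\<lambda>j. cadj (A j) * X * A j) = X \<Longrightarrow> \<exists>c. X = c \<cdot>\<^sub>m 1\<^sub>m D"
    using inj unfolding injective_mps_def by blast
  have rc: "\<rho> \<in> carrier_mat D D" and herm: "cadj \<rho> = \<rho>" using rho unfolding density_mat_def by auto
  define B where "B = Bm d D u A"
  have Bc: "\<And>j. B j \<in> carrier_mat D D" unfolding B_def by simp
  define R where "R = (\<lambda>j. Y * B j - z \<cdot>\<^sub>m (A j * Y))"
  have zz: "cnj z * z = 1"
  proof -
    have "complex_of_real ((cmod z)^2) = z * cnj z" by (rule complex_norm_square)
    thus ?thesis using z1 by (simp add: mult.commute)
  qed
  define t where "t = sf D \<rho> Y Y"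
  have tr: "cnj t = t" unfolding t_def by (rule sf_herm[OF rc herm])
  define M where "M = cadj Y * Y"
  have Mc: "M \<in> carrier_mat D D" unfolding M_def using Yc by (simp add: sqm cadj_carrier[of _ D D])
  have t_alt: "t = ctrace (\<rho> * M)" unfolding t_def M_def by (rule e6[OF Yc rc])
  have expand: "sf D \<rho> (R j) (R j) = sf D \<rho> (Y * B j) (Y * B j) - cnj z * sf D \<rho> (Y * B j) (A j * Y)
       - z * (sf D \<rho> (A j * Y) (Y * B j) - cnj z * sf D \<rho> (A j * Y) (A j * Y))" if j: "j < d" for j
  proof -
    have Aj: "A j \<in> carrier_mat D D" using A j .
    have c1: "Y * B j \<in> carrier_mat D D" "A j * Y \<in> carrier_mat D D" using Yc Bc Aj by auto
    show ?thesis unfolding R_def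
      by (simp add: sf_minus_left[OF c1] sf_minus_right[OF c1]) (simp add: algebra_simps)
  qed
  have S1: "(\<Sum>j<d. sf D \<rho> (Y * B j) (Y * B j)) = t"
  proof -
    have "(\<Sum>j<d. sf D \<rho> (Y * B j) (Y * B j)) = (\<Sum>j<d. ctrace ((cadj (B j) * M * B j) * \<rho>))"
      unfolding M_def using Yc Bc rc by (simp add: e1)
    also have "\<dots> = ctrace (msum D D d (\<lambda>j. cadj (B j) * M * B j) * \<rho>)"
      by (rule ctrace_msum_mult, insert Mc Bc rc, auto simp: sqm cadj_carrier[of _ D D])
    also have "msum D D d (\<lambda>j. cadj (B j) * M * B j) = msum D D d (\<lambda>j. cadj (A j) * M * A j)"
      unfolding B_def by (rule bm_conj_sum[OF A U Mc])
    also have "ctrace (msum D D d (\<lambda>j. cadj (A j) * M * A j) * \<rho>) = (\<Sum>j<d. ctrace ((cadj (A j) * M * A j) * \<rho>))"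
      by (rule ctrace_msum_mult[symmetric], insert Mc A rc, auto simp: sqm cadj_carrier[of _ D D])
    also have "\<dots> = (\<Sum>j<d. ctrace ((A j * \<rho> * cadj (A j)) * M))"
      by (rule sum.cong[OF refl], rule e5[OF Mc rc A], simp)
    also have "\<dots> = ctrace (msum D D d (\<lambda>j. A j * \<rho> * cadj (A j)) * M)"
      by (rule ctrace_msum_mult, insert Mc A rc, auto simp: sqm cadj_carrier[of _ D D])
    also have "\<dots> = t" unfolding fixp t_alt
      by (rule refl)
    finally show ?thesis .
  qed
  have S2: "(\<Sum>j<d. sf D \<rho> (Y * B j) (A j * Y)) = z * t"
  proof -
    have "(\<Sum>j<d. sf D \<rho> (Y * B j) (A j * Y)) = (\<Sum>j<d. ctrace ((cadj (A j) * Y * B j) * (\<rho> * cadj Y)))"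
      by (rule sum.cong[OF refl], rule e2[OF Yc Bc rc A], simp)
    also have "\<dots> = ctrace (msum D D d (\<lambda>j. cadj (A j) * Y * B j) * (\<rho> * cadj Y))"
      by (rule ctrace_msum_mult, insert Yc Bc A rc, auto simp: sqm cadj_carrier[of _ D D])
    also have "\<dots> = ctrace ((z \<cdot>\<^sub>m Y) * (\<rho> * cadj Y))" using Psi unfolding B_def by simp
    also have "\<dots> = z * ctrace (Y * (\<rho> * cadj Y))"
      using Yc rc by (simp add: mult_smult_assoc_mat[of _ D D _ D] ctrace_smult[of _ D])
    also have "ctrace (Y * (\<rho> * cadj Y)) = t" unfolding t_def using Yc rc
      by (simp add: sf_ctrace assoc_mult_mat[of _ D D _ D _ D] cadj_carrier[of _ D D])
    finally show ?thesis .
  qed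
  have S3: "(\<Sum>j<d. sf D \<rho> (A j * Y) (Y * B j)) = cnj z * t"
  proof -
    have "(\<Sum>j<d. sf D \<rho> (A j * Y) (Y * B j)) = (\<Sum>j<d. cnj (sf D \<rho> (Y * B j) (A j * Y)))"
      by (simp add: sf_herm[OF rc herm])
    also have "\<dots> = cnj (z * t)" using S2 by (metis cnj_sum)
    finally show ?thesis using tr by simp
  qed
  have S4: "(\<Sum>j<d. sf D \<rho> (A j * Y) (A j * Y)) = t"
  proof -
    have "(\<Sum>j<d. sf D \<rho> (A j * Y) (A j * Y)) = (\<Sum>j<d. ctrace ((cadj (A j) * A j) * (Y * \<rho> * cadj Y)))"
      by (rule sum.cong[OF refl], rule e4[OF Yc rc A], simp)
    also have "\<dots> = ctrace (msum D D d (\<lambda>j. cadj (A j) * A j) * (Y * \<rho> * cadj Y))"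
      by (rule ctrace_msum_mult, insert Yc A rc, auto simp: sqm cadj_carrier[of _ D D])
    also have "\<dots> = t" unfolding LC t_def using Yc rc by (simp add: sf_ctrace)
    finally show ?thesis .
  qed
  have total: "(\<Sum>j<d. sf D \<rho> (R j) (R j)) = 0"
  proof -
    have "(\<Sum>j<d. sf D \<rho> (R j) (R j)) = (\<Sum>j<d. sf D \<rho> (Y * B j) (Y * B j) - cnj z * sf D \<rho> (Y * B j) (A j * Y)
       - z * (sf D \<rho> (A j * Y) (Y * B j) - cnj z * sf D \<rho> (A j * Y) (A j * Y)))"
      by (rule sum.cong[OF refl], rule expand, simp)
    also have "\<dots> = t - cnj z * (z * t) - z * (cnj z * t - cnj z * t)"
      using S1 S2 S3 S4 by (simp add: sum_subtractf sum_distrib_left[symmetric])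
    also have "\<dots> = 0" using zz by (simp add: algebra_simps)
    finally show ?thesis .
  qed
  have Rc: "R j \<in> carrier_mat D D" if "j < d" for j
  proof -
    have "Y * B j \<in> carrier_mat D D" "A j * Y \<in> carrier_mat D D" using Yc Bc[of j] A[OF that] by (auto simp: sqm)
    thus ?thesis unfolding R_def by (intro minus_carrier_mat, simp)
  qed
  have R0: "R j = 0\<^sub>m D D" if j: "j < d" for j
  proof -
    have "(\<Sum>j<d. Re (sf D \<rho> (R j) (R j))) = 0" using total by (metis Re_sum zero_complex.sel(1))
    hence "\<forall>j\<in>{..<d}. Re (sf D \<rho> (R j) (R j)) = 0"
      by (subst (asm) sum_nonneg_eq_0_iff, auto intro: sf_pos[OF rho])
    thus ?thesis using sf_zero[OF rho det Rc[OF j]] j by auto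
  qed
  have YB: "Y * B j = z \<cdot>\<^sub>m (A j * Y)" if j: "j < d" for j
  proof (rule eq_matI)
    fix a b assume "a < dim_row (z \<cdot>\<^sub>m (A j * Y))" "b < dim_col (z \<cdot>\<^sub>m (A j * Y))"
    hence a: "a < D" and b: "b < D" using A[OF j] Yc by auto
    have "R j $$ (a,b) = 0" using R0[OF j] a b by simp
    thus "(Y * B j) $$ (a,b) = (z \<cdot>\<^sub>m (A j * Y)) $$ (a,b)"
      unfolding R_def using a b A[OF j] Yc Bc by simp
  qed (insert A[OF j] Yc Bc, auto)
  have Mfix: "msum D D d (\<lambda>j. cadj (A j) * M * A j) = M"
  proof -
    have "msum D D d (\<lambda>j. cadj (A j) * M * A j) = msum D D d (\<lambda>j. cadj (B j) * M * B j)"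
      unfolding B_def by (rule bm_conj_sum[OF A U Mc, symmetric])
    also have "\<dots> = msum D D d (\<lambda>j. cadj Y * (cadj (A j) * A j) * Y)"
    proof (rule msum_cong)
      fix j assume j: "j < d"
      have Aj: "A j \<in> carrier_mat D D" using A j .
      have "cadj (B j) * M * B j = cadj (Y * B j) * (Y * B j)"
        unfolding M_def using Yc Bc Aj
        by (simp add: cadj_mult[of Y D D "B j" D] assoc_mult_mat[of _ D D _ D _ D] sqm cadj_carrier[of _ D D])
      also have "\<dots> = cadj (z \<cdot>\<^sub>m (A j * Y)) * (z \<cdot>\<^sub>m (A j * Y))" using YB[OF j] by simp
      also have "\<dots> = (cnj z * z) \<cdot>\<^sub>m (cadj (A j * Y) * (A j * Y))"
        using Yc Aj by (simp add: cadj_smult mult_smult_assoc_mat[of _ D D _ D] mult_smult_distrib[of _ D D _ D] sqm cadj_carrier[of _ D D] smult_smult_m mult.commute)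
      also have "\<dots> = cadj Y * (cadj (A j) * A j) * Y"
        using zz Yc Aj by (simp add: cadj_mult[of Aj D D] cadj_mult[of "A j" D D Y D] assoc_mult_mat[of _ D D _ D _ D] sqm cadj_carrier[of _ D D] smult_one_m)
      finally show "cadj (B j) * M * B j = cadj Y * (cadj (A j) * A j) * Y" .
    qed
    also have "\<dots> = cadj Y * msum D D d (\<lambda>j. cadj (A j) * A j) * Y"
    proof -
      have "msum D D d (\<lambda>j. cadj Y * (cadj (A j) * A j) * Y) = msum D D d (\<lambda>j. cadj Y * (cadj (A j) * A j)) * Y"
        by (rule mult_msum_left[symmetric], insert Yc A, auto simp: sqm cadj_carrier[of _ D D])
      also have "msum D D d (\<lambda>j. cadj Y * (cadj (A j) * A j)) = cadj Y * msum D D d (\<lambda>j. cadj (A j) * A j)"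
        by (rule mult_msum_right[symmetric], insert Yc A, auto simp: sqm cadj_carrier[of _ D D])
      finally show ?thesis .
    qed
    also have "\<dots> = M" unfolding LC M_def using Yc by simp
    finally show ?thesis .
  qed
  obtain c where Mc1: "M = c \<cdot>\<^sub>m 1\<^sub>m D" using uniq[OF Mc Mfix] by blast
  obtain a i where ai: "a < D" "i < D" "Y $$ (a,i) \<noteq> 0"
  proof -
    have "\<exists>a<D. \<exists>i<D. Y $$ (a,i) \<noteq> 0"
    proof (rule ccontr)
      assume "\<not> ?thesis"
      hence "Y = 0\<^sub>m D D" using Yc by (auto intro!: eq_matI)
      thus False using Ynz by simp
    qed
    thus ?thesis using that by blast
  qed
  define r where "r = (\<Sum>b<D. (cmod (Y $$ (b,i)))^2)"
  have rpos: "r > 0"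
  proof -
    have "(cmod (Y $$ (a,i)))^2 > 0" using ai by simp
    moreover have "(cmod (Y $$ (a,i)))^2 \<le> r" unfolding r_def
      by (rule member_le_sum, insert ai, auto)
    ultimately show ?thesis by (metis less_le_trans)
  qed
  have Mii: "M $$ (i,i) = of_real r"
  proof -
    have "M $$ (i,i) = (\<Sum>b<D. cnj (Y $$ (b,i)) * Y $$ (b,i))"
      unfolding M_def using Yc ai by (simp add: scalar_prod_def lessThan_atLeast0)
    also have "\<dots> = (\<Sum>b<D. complex_of_real ((cmod (Y $$ (b,i)))^2))"
      by (rule sum.cong[OF refl], metis complex_norm_square mult.commute)
    also have "\<dots> = of_real r" unfolding r_def by (simp only: of_real_sum)
    finally show ?thesis .
  qed
  have cr: "c = of_real r" using Mii Mc1 ai by simp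
  define s where "s = complex_of_real (1 / sqrt r)"
  have ss: "cnj s * s * of_real r = 1"
  proof -
    have "cnj s * s * of_real r = complex_of_real (1 / sqrt r * (1 / sqrt r) * r)" unfolding s_def by (simp only: complex_cnj_complex_of_real of_real_mult)
    also have "1 / sqrt r * (1 / sqrt r) * r = 1" using rpos
      by (simp add: field_simps) 
    finally show ?thesis by simp
  qed
  define W where "W = s \<cdot>\<^sub>m Y"
  have Wc: "W \<in> carrier_mat D D" unfolding W_def using Yc by simp
  have WW: "cadj W * W = 1\<^sub>m D"
  proof -
    have "cadj W * W = (cnj s * s) \<cdot>\<^sub>m M"
      unfolding W_def M_def using Yc
      by (simp add: cadj_smult mult_smult_assoc_mat[of _ D D _ D] mult_smult_distrib[of _ D D _ D] cadj_carrier[of _ D D] smult_smult_m mult.commute)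
    also have "\<dots> = 1\<^sub>m D" unfolding Mc1 cr using ss by (simp add: smult_smult_m smult_one_m)
    finally show ?thesis .
  qed
  have WW2: "W * cadj W = 1\<^sub>m D" by (rule mat_mult_left_right_inverse[OF _ Wc WW], insert Wc, simp)
  define v where "v = cadj W"
  have vu: "unitary_cmat D v" unfolding unitary_cmat_def v_def using Wc WW WW2 by simp
  have "Bm d D u A j = z \<cdot>\<^sub>m (v * A j * cadj v)" if j: "j < d" for j
  proof -
    have Aj: "A j \<in> carrier_mat D D" using A j .
    have WB: "W * B j = z \<cdot>\<^sub>m (A j * W)"
    proof -
      have "W * B j = s \<cdot>\<^sub>m (Y * B j)" unfolding W_def using Yc Bc by (simp add: mult_smult_assoc_mat[of _ D D _ D])
      also have "\<dots> = s \<cdot>\<^sub>m (z \<cdot>\<^sub>m (A j * Y))" using YB[OF j] by simp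
      also have "\<dots> = z \<cdot>\<^sub>m (A j * W)" unfolding W_def using Yc Aj
        by (simp add: mult_smult_distrib[of _ D D _ D] smult_smult_m mult.commute)
      finally show ?thesis .
    qed
    have "B j = (cadj W * W) * B j" using WW Bc[of j] by simp
    also have "\<dots> = cadj W * (W * B j)" using Wc Bc by (simp add: assoc_mult_mat[of _ D D _ D _ D] cadj_carrier[of _ D D])
    also have "\<dots> = z \<cdot>\<^sub>m (cadj W * A j * W)" unfolding WB using Wc Aj
      by (simp add: mult_smult_distrib[of _ D D _ D] assoc_mult_mat[of _ D D _ D _ D] cadj_carrier[of _ D D])
    finally show ?thesis unfolding v_def B_def by simp
  qed
  thus ?thesis using vu by blast
qed


theorem lemma2:
  fixes d D :: nat and A :: "nat \<Rightarrow> complex mat" and u :: "complex mat"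
  assumes "mps_tensor d D A"
    and "injective_mps d D A"
    and "unitary_cmat d u"
  shows "(\<exists>z. eigenvalue (transfer_u d D u A) z \<and> cmod z = 1) \<longleftrightarrow>
         (\<exists>v (\<theta>::real). unitary_cmat D v \<and>
            (\<forall>j<d. msum D D d (\<lambda>k. u $$ (j,k) \<cdot>\<^sub>m A k)
                     = exp (\<i> * of_real \<theta>) \<cdot>\<^sub>m (v * A j * cadj v)))"
proof -
  have A: "\<And>k. k < d \<Longrightarrow> A k \<in> carrier_mat D D" using assms(1) unfolding mps_tensor_def by blast
  show ?thesis
  proof
    assume "\<exists>z. eigenvalue (transfer_u d D u A) z \<and> cmod z = 1"
    then obtain z where ev: "eigenvalue (transfer_u d D u A) z" and z1: "cmod z = 1" by blast
    obtain v where vu: "unitary_cmat D v" and hv: "\<forall>j<d. Bm d D u A j = z \<cdot>\<^sub>m (v * A j * cadj v)"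
      using forward[OF A assms(2) assms(3) ev z1] by blast
    have ez: "exp (\<i> * of_real (Arg z)) = z"
    proof -
      have "z = rcis (cmod z) (Arg z)" by (simp add: rcis_cmod_Arg)
      also have "\<dots> = cis (Arg z)" using z1 by (simp add: rcis_def)
      also have "\<dots> = exp (\<i> * of_real (Arg z))" by (rule cis_conv_exp)
      finally show ?thesis by simp
    qed
    show "\<exists>v (\<theta>::real). unitary_cmat D v \<and>
            (\<forall>j<d. msum D D d (\<lambda>k. u $$ (j,k) \<cdot>\<^sub>m A k)
                     = exp (\<i> * of_real \<theta>) \<cdot>\<^sub>m (v * A j * cadj v))"
      using vu hv ez unfolding Bm_def by (intro exI[of _ v] exI[of _ "Arg z"]) simp
  next
    assume "\<exists>v (\<theta>::real). unitary_cmat D v \<and>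
            (\<forall>j<d. msum D D d (\<lambda>k. u $$ (j,k) \<cdot>\<^sub>m A k)
                     = exp (\<i> * of_real \<theta>) \<cdot>\<^sub>m (v * A j * cadj v))"
    then obtain v and \<theta> :: real where vu: "unitary_cmat D v"
      and h: "\<forall>j<d. msum D D d (\<lambda>k. u $$ (j,k) \<cdot>\<^sub>m A k) = exp (\<i> * of_real \<theta>) \<cdot>\<^sub>m (v * A j * cadj v)"
      by blast
    have "eigenvalue (transfer_u d D u A) (exp (\<i> * of_real \<theta>))"
      using backward[OF A assms(2) vu, where u = u and c = "exp (\<i> * of_real \<theta>)"] h unfolding Bm_def by blast
    moreover have "cmod (exp (\<i> * of_real \<theta>)) = 1" by simp
    ultimately show "\<exists>z. eigenvalue (transfer_u d D u A) z \<and> cmod z = 1" by blast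
  qed
qed

end
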